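(* Consider a common-value auction for a single item among at least two "slow" bidders and one "fast" bidder, all risk neutral. The value of the item evolves as $v_t = e^{m_t} v_0$ for $t \ge 0$, where $v_0>0$ and $m_t \sim N(-\tfrac{\sigma^2}{2} t, \sigma^2 t)$ (a geometric Brownian motion with $\sigma>0$, so $\mathbb{E}[v_{t+\delta}\mid v_t] = v_t$ for all $t,\delta\ge 0$). The slow bidders submit sealed bids at time $0$. With probability $p \in [0,1]$ (independently of the value process), the fast bidder gets an opportunity at time $\Delta>0$, after observing the slow bidders' bids and $v_\Delta$, to submit a bid that outbids the highest slow bid; otherwise the fast bidder does not bid. The highest bidder wins, pays its own bid, and receives the realized value of the item (with expected value $v_0$ given time-$0$ information). Then in equilibrium the winning slow bidder's time-$0$ bid is the largest $b_0^S \in [0, v_0]$ solving $$(1-p)(v_0 - b_0^S) + p\, P(v_\Delta < b_0^S)\big(\mathbb{E}[v_\Delta \mid v_\Delta < b_0^S] - b_0^S\big) = 0,$$ and the slow bidder wins the item with probability $p\, P(v_\Delta < b_0^S) + (1-p)$.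
   Context: A bidder's payoff is the value of the item minus its bid if it wins, and $0$ otherwise. If given a revision opportunity, the fast bidder outbids the highest slow bid $b$ (paying $b$) exactly when $v_\Delta > b$. *)

theory Defs
  imports "HOL-Probability.Probability"
begin

definition logret_dist :: "real \<Rightarrow> real \<Rightarrow> real measure" where
  "logret_dist \<sigma> \<Delta> = density lborel (normal_density (- (\<sigma>\<^sup>2 * \<Delta> / 2)) (sqrt (\<sigma>\<^sup>2 * \<Delta>)))"

definition vDelta :: "real \<Rightarrow> real \<Rightarrow> real" where
  "vDelta v0 m = exp m * v0"

definition prob_below :: "real \<Rightarrow> real \<Rightarrow> real \<Rightarrow> real \<Rightarrow> real" where
  "prob_below v0 \<sigma> \<Delta> b = measure (logret_dist \<sigma> \<Delta>) {m. vDelta v0 m < b}"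

definition cond_exp_below :: "real \<Rightarrow> real \<Rightarrow> real \<Rightarrow> real \<Rightarrow> real" where
  "cond_exp_below v0 \<sigma> \<Delta> b =
     (\<integral>m. indicator {m. vDelta v0 m < b} m * vDelta v0 m \<partial>logret_dist \<sigma> \<Delta>) / prob_below v0 \<sigma> \<Delta> b"

definition zero_profit_lhs :: "real \<Rightarrow> real \<Rightarrow> real \<Rightarrow> real \<Rightarrow> real \<Rightarrow> real" where
  "zero_profit_lhs v0 \<sigma> \<Delta> p b =
     (1 - p) * (v0 - b) + p * prob_below v0 \<sigma> \<Delta> b * (cond_exp_below v0 \<sigma> \<Delta> b - b)"

text \<open>Expected payoff of a slow bidder who wins at time 0 with the highest slow bid b
  (before tie-splitting). With probability 1-p the fast bidder gets no opportunity and the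
  slow bidder receives the item (expected value v_Delta, whose mean is v0 given time-0
  information); with probability p the fast bidder outbids exactly when v_Delta > b
  (the slow bidder then gets 0), and otherwise the slow bidder gets v_Delta - b.\<close>
definition top_payoff :: "real \<Rightarrow> real \<Rightarrow> real \<Rightarrow> real \<Rightarrow> real \<Rightarrow> real" where
  "top_payoff v0 \<sigma> \<Delta> p b =
     (1 - p) * (\<integral>m. vDelta v0 m - b \<partial>logret_dist \<sigma> \<Delta>)
     + p * (\<integral>m. (if vDelta v0 m > b then 0 else vDelta v0 m - b) \<partial>logret_dist \<sigma> \<Delta>)"

definition slow_payoff ::
  "nat \<Rightarrow> real \<Rightarrow> real \<Rightarrow> real \<Rightarrow> real \<Rightarrow> (nat \<Rightarrow> real) \<Rightarrow> nat \<Rightarrow> real" where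
  "slow_payoff n v0 \<sigma> \<Delta> p \<beta> i =
     (let hi = Max (\<beta> ` {..<n}); W = {j. j < n \<and> \<beta> j = hi}
      in if \<beta> i = hi then top_payoff v0 \<sigma> \<Delta> p hi / real (card W) else 0)"

text \<open>Pure-strategy (Nash) equilibrium of the slow bidders' sealed-bid game, with the fast
  bidder playing its (optimal) strategy of outbidding the highest slow bid iff v_Delta > b.\<close>
definition slow_equilibrium ::
  "nat \<Rightarrow> real \<Rightarrow> real \<Rightarrow> real \<Rightarrow> real \<Rightarrow> (nat \<Rightarrow> real) \<Rightarrow> bool" where
  "slow_equilibrium n v0 \<sigma> \<Delta> p \<beta> \<longleftrightarrow>
     (\<forall>i<n. 0 \<le> \<beta> i) \<and>
     (\<forall>i<n. \<forall>b'\<ge>0. slow_payoff n v0 \<sigma> \<Delta> p (\<beta>(i := b')) i \<le> slow_payoff n v0 \<sigma> \<Delta> p \<beta> i)"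

definition slow_win_prob :: "real \<Rightarrow> real \<Rightarrow> real \<Rightarrow> real \<Rightarrow> real \<Rightarrow> real" where
  "slow_win_prob v0 \<sigma> \<Delta> p b =
     (1 - p) + p * measure (logret_dist \<sigma> \<Delta>) {m. vDelta v0 m \<le> b}"

end

theory Submission imports Defs begin

lemma nd_shift:
  fixes S x :: real assumes "0 < S"
  shows "normal_density (-(S/2)) (sqrt S) x * exp x = normal_density (S/2) (sqrt S) x"
proof -
  have "-(x - -(S/2))\<^sup>2 / (2 * (sqrt S)\<^sup>2) + x = -(x - S/2)\<^sup>2 / (2 * (sqrt S)\<^sup>2)"
    using assms by (simp add: field_simps power2_eq_square)
  then have "exp (-(x - -(S/2))\<^sup>2 / (2 * (sqrt S)\<^sup>2)) * exp x = exp (-(x - S/2)\<^sup>2 / (2 * (sqrt S)\<^sup>2))"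
    by (metis exp_add)
  then show ?thesis unfolding normal_density_def by (metis mult.assoc)
qed

lemma M_prob: assumes "0 < \<sigma>" "0 < \<Delta>" shows "prob_space (logret_dist \<sigma> \<Delta>)"
  unfolding logret_dist_def by (rule prob_space_normal_density) (use assms in simp)

lemma M_sets[measurable_cong, simp]: "sets (logret_dist \<sigma> \<Delta>) = sets borel"
  unfolding logret_dist_def by simp

lemma M_space[simp]: "space (logret_dist \<sigma> \<Delta>) = UNIV"
  unfolding logret_dist_def by simp

lemma M_mean:
  assumes "0 < \<sigma>" "0 < \<Delta>"
  shows "integrable (logret_dist \<sigma> \<Delta>) (\<lambda>m. exp m * v0)"
    "(\<integral>m. exp m * v0 \<partial>logret_dist \<sigma> \<Delta>) = v0"
proof -
  define S where "S = \<sigma>\<^sup>2 * \<Delta>"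
  have S: "0 < S" using assms by (simp add: S_def)
  have M: "logret_dist \<sigma> \<Delta> = density lborel (normal_density (-(S/2)) (sqrt S))"
    unfolding logret_dist_def S_def by simp
  have eq: "(\<lambda>x. normal_density (-(S/2)) (sqrt S) x * (exp x * v0)) = (\<lambda>x. v0 * normal_density (S/2) (sqrt S) x)"
    using nd_shift[OF S] by (auto simp: fun_eq_iff mult.assoc[symmetric] mult.commute)
  show "integrable (logret_dist \<sigma> \<Delta>) (\<lambda>m. exp m * v0)"
    unfolding M using integrable_normal_density[of "S/2" "sqrt S"] S by (subst integrable_density) (auto simp: eq)
  show "(\<integral>m. exp m * v0 \<partial>logret_dist \<sigma> \<Delta>) = v0"
    unfolding M using integral_normal_density[of "S/2" "sqrt S"] S by (subst integral_density) (auto simp: eq)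
qed

lemma M_point:
  assumes "0 < v0"
  shows "measure (logret_dist \<sigma> \<Delta>) {m. exp m * v0 = b} = 0"
proof (cases "b > 0")
  case True
  have "{m. exp m * v0 = b} = {ln (b / v0)}"
    using assms True by (auto simp: field_simps)
  moreover have "emeasure (logret_dist \<sigma> \<Delta>) {ln (b / v0)} = 0"
    unfolding logret_dist_def by (subst emeasure_density) auto
  ultimately show ?thesis by (simp add: measure_def)
next
  case False
  then have "{m. exp m * v0 = b} = {}" using assms
    using mult_pos_pos[OF exp_gt_zero assms] by force
  then show ?thesis by simp
qed

lemma M_pos:
  assumes "0 < v0" "0 < c" "0 < \<sigma>" "0 < \<Delta>"
  shows "0 < measure (logret_dist \<sigma> \<Delta>) {m. exp m * v0 < c}"
proof -
  interpret prob_space "logret_dist \<sigma> \<Delta>" by (rule M_prob) (use assms in auto)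
  define L where "L = ln (c / v0)"
  have sub: "{L - 1<..<L} \<subseteq> {m. exp m * v0 < c}"
  proof
    fix m assume "m \<in> {L - 1<..<L}"
    then have "exp m < exp L" by simp
    also have "exp L = c / v0" using assms by (simp add: L_def)
    finally show "m \<in> {m. exp m * v0 < c}" using assms by (simp add: field_simps)
  qed
  have "emeasure (logret_dist \<sigma> \<Delta>) {L - 1<..<L} \<noteq> 0"
  proof
    assume "emeasure (logret_dist \<sigma> \<Delta>) {L - 1<..<L} = 0"
    then have "(\<integral>\<^sup>+ x. ennreal (normal_density (- (\<sigma>\<^sup>2 * \<Delta> / 2)) (sqrt (\<sigma>\<^sup>2 * \<Delta>)) x) * indicator {L - 1<..<L} x \<partial>lborel) = 0"
      unfolding logret_dist_def by (subst (asm) emeasure_density) auto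
    then have "AE x in lborel. ennreal (normal_density (- (\<sigma>\<^sup>2 * \<Delta> / 2)) (sqrt (\<sigma>\<^sup>2 * \<Delta>)) x) * indicator {L - 1<..<L} x = 0"
      by (subst (asm) nn_integral_0_iff_AE) auto
    then have "AE x in lborel. x \<notin> {L - 1<..<L}"
      by (rule AE_mp) (use assms in \<open>auto simp: indicator_def normal_density_def\<close>)
    then have "emeasure lborel {L - 1<..<L} = 0"
      by (subst (asm) AE_iff_measurable[where N="{L - 1<..<L}"]) auto
    then show False by simp
  qed
  then have "0 < measure (logret_dist \<sigma> \<Delta>) {L - 1<..<L}"
    using emeasure_eq_measure by (simp add: zero_less_measure_iff)
  also have "\<dots> \<le> measure (logret_dist \<sigma> \<Delta>) {m. exp m * v0 < c}"
    by (rule finite_measure_mono[OF sub]) simp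
  finally show ?thesis .
qed

definition Gf :: "real \<Rightarrow> real \<Rightarrow> real \<Rightarrow> real \<Rightarrow> real" where
  "Gf v0 \<sigma> \<Delta> b = (\<integral>m. indicator {m. exp m * v0 < b} m * (exp m * v0 - b) \<partial>logret_dist \<sigma> \<Delta>)"

context
  fixes v0 \<sigma> \<Delta> :: real
  assumes pos: "0 < v0" "0 < \<sigma>" "0 < \<Delta>"
begin

interpretation P: prob_space "logret_dist \<sigma> \<Delta>" by (rule M_prob) (use pos in auto)

lemma ind_int: "integrable (logret_dist \<sigma> \<Delta>) (\<lambda>m. indicator {m. exp m * v0 < b} m * (exp m * v0 - c))"
proof (rule P.integrable_const_bound[where B="\<bar>b\<bar> + \<bar>c\<bar>"])
  show "AE x in logret_dist \<sigma> \<Delta>. norm (indicator {m. exp m * v0 < b} x * (exp x * v0 - c)) \<le> \<bar>b\<bar> + \<bar>c\<bar>"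
  proof (rule AE_I2)
    fix x
    have "0 < exp x * v0" using pos by simp
    then show "norm (indicator {m. exp m * v0 < b} x * (exp x * v0 - c)) \<le> \<bar>b\<bar> + \<bar>c\<bar>"
      by (auto simp: indicator_def)
  qed
qed simp

lemma ind_int2: "integrable (logret_dist \<sigma> \<Delta>) (\<lambda>m. indicator {m. exp m * v0 < b} m :: real)"
  by (rule P.integrable_const_bound[where B=1]) (auto simp: indicator_def)

lemma G_nonpos: "Gf v0 \<sigma> \<Delta> b \<le> 0"
proof -
  have "Gf v0 \<sigma> \<Delta> b \<le> (\<integral>m. 0 \<partial>logret_dist \<sigma> \<Delta>)"
    unfolding Gf_def by (rule integral_mono[OF ind_int]) (auto simp: indicator_def)
  then show ?thesis by simp
qed

lemma G_zero: "b \<le> 0 \<Longrightarrow> Gf v0 \<sigma> \<Delta> b = 0"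
proof -
  assume b: "b \<le> 0"
  have "{m. exp m * v0 < b} = {}"
  proof (intro equalityI subsetI)
    fix m assume "m \<in> {m. exp m * v0 < b}"
    moreover have "0 < exp m * v0" using pos by simp
    ultimately show "m \<in> {}" using b by simp
  qed simp
  then have "\<And>m. indicator {m. exp m * v0 < b} m * (exp m * v0 - b) = (0::real)"
    by simp
  then show ?thesis unfolding Gf_def by (simp only:) simp
qed

lemma G_diff: "Gf v0 \<sigma> \<Delta> b - Gf v0 \<sigma> \<Delta> b' =
  (\<integral>m. indicator {m. exp m * v0 < b} m * (exp m * v0 - b) - indicator {m. exp m * v0 < b'} m * (exp m * v0 - b') \<partial>logret_dist \<sigma> \<Delta>)"
  unfolding Gf_def by (rule Bochner_Integration.integral_diff[symmetric]; rule ind_int)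

lemma G_lip:
  assumes "b \<le> b'"
  shows "0 \<le> Gf v0 \<sigma> \<Delta> b - Gf v0 \<sigma> \<Delta> b'" "Gf v0 \<sigma> \<Delta> b - Gf v0 \<sigma> \<Delta> b' \<le> b' - b"
proof -
  have int: "integrable (logret_dist \<sigma> \<Delta>) (\<lambda>m. indicator {m. exp m * v0 < b} m * (exp m * v0 - b) - indicator {m. exp m * v0 < b'} m * (exp m * v0 - b'))"
    by (intro Bochner_Integration.integrable_diff ind_int)
  have "(\<integral>m. 0 \<partial>logret_dist \<sigma> \<Delta>) \<le> (\<integral>m. indicator {m. exp m * v0 < b} m * (exp m * v0 - b) - indicator {m. exp m * v0 < b'} m * (exp m * v0 - b') \<partial>logret_dist \<sigma> \<Delta>)"
    by (rule integral_mono[OF _ int]) (use assms in \<open>auto simp: indicator_def\<close>)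
  then show "0 \<le> Gf v0 \<sigma> \<Delta> b - Gf v0 \<sigma> \<Delta> b'" by (simp add: G_diff)
  have "(\<integral>m. indicator {m. exp m * v0 < b} m * (exp m * v0 - b) - indicator {m. exp m * v0 < b'} m * (exp m * v0 - b') \<partial>logret_dist \<sigma> \<Delta>) \<le> (\<integral>m. b' - b \<partial>logret_dist \<sigma> \<Delta>)"
    by (rule integral_mono[OF int]) (use assms in \<open>auto simp: indicator_def\<close>)
  then show "Gf v0 \<sigma> \<Delta> b - Gf v0 \<sigma> \<Delta> b' \<le> b' - b" using P.prob_space by (simp add: G_diff)
qed

lemma G_strict:
  assumes "0 \<le> b" "b < b'"
  shows "0 < Gf v0 \<sigma> \<Delta> b - Gf v0 \<sigma> \<Delta> b'"
proof -
  define c where "c = (b + b') / 2"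
  have c: "0 < c" "b < c" "c < b'" using assms by (auto simp: c_def)
  have int: "integrable (logret_dist \<sigma> \<Delta>) (\<lambda>m. indicator {m. exp m * v0 < b} m * (exp m * v0 - b) - indicator {m. exp m * v0 < b'} m * (exp m * v0 - b'))"
    by (intro Bochner_Integration.integrable_diff ind_int)
  have "(\<integral>m. (b' - b) / 2 * indicator {m. exp m * v0 < c} m \<partial>logret_dist \<sigma> \<Delta>) \<le> (\<integral>m. indicator {m. exp m * v0 < b} m * (exp m * v0 - b) - indicator {m. exp m * v0 < b'} m * (exp m * v0 - b') \<partial>logret_dist \<sigma> \<Delta>)"
    by (rule integral_mono[OF integrable_mult_right[OF ind_int2] int]) (use assms c in \<open>auto simp: indicator_def c_def\<close>)
  moreover have "(\<integral>m. (b' - b) / 2 * indicator {m. exp m * v0 < c} m \<partial>logret_dist \<sigma> \<Delta>) = (b' - b) / 2 * measure (logret_dist \<sigma> \<Delta>) {m. exp m * v0 < c}"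
    by simp
  moreover have "0 < (b' - b) / 2 * measure (logret_dist \<sigma> \<Delta>) {m. exp m * v0 < c}"
    using M_pos[OF pos(1) c(1) pos(2,3)] assms by simp
  ultimately show ?thesis by (simp add: G_diff)
qed


lemma top_eq: "top_payoff v0 \<sigma> \<Delta> p b = (1 - p) * (v0 - b) + p * Gf v0 \<sigma> \<Delta> b"
proof -
  have "(\<integral>m. vDelta v0 m - b \<partial>logret_dist \<sigma> \<Delta>) = v0 - b"
    unfolding vDelta_def using M_mean[OF pos(2,3), of v0] P.prob_space
    by (subst Bochner_Integration.integral_diff) auto
  moreover have "(\<integral>m. (if vDelta v0 m > b then 0 else vDelta v0 m - b) \<partial>logret_dist \<sigma> \<Delta>) = Gf v0 \<sigma> \<Delta> b"
    unfolding Gf_def vDelta_def by (rule Bochner_Integration.integral_cong) (auto simp: indicator_def)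
  ultimately show ?thesis unfolding top_payoff_def by simp
qed

lemma zp_eq: "zero_profit_lhs v0 \<sigma> \<Delta> p b = (1 - p) * (v0 - b) + p * Gf v0 \<sigma> \<Delta> b"
proof -
  define P where "P = prob_below v0 \<sigma> \<Delta> b"
  define E where "E = (\<integral>m. indicator {m. vDelta v0 m < b} m * vDelta v0 m \<partial>logret_dist \<sigma> \<Delta>)"
  have P: "P = measure (logret_dist \<sigma> \<Delta>) {m. exp m * v0 < b}"
    unfolding P_def prob_below_def vDelta_def by simp
  have E: "E = (\<integral>m. indicator {m. exp m * v0 < b} m * (exp m * v0 - 0) \<partial>logret_dist \<sigma> \<Delta>)"
    unfolding E_def vDelta_def by simp
  have G: "Gf v0 \<sigma> \<Delta> b = E - b * P"
  proof -
    have "Gf v0 \<sigma> \<Delta> b = (\<integral>m. indicator {m. exp m * v0 < b} m * (exp m * v0 - 0) - b * indicator {m. exp m * v0 < b} m \<partial>logret_dist \<sigma> \<Delta>)"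
      unfolding Gf_def by (rule Bochner_Integration.integral_cong) (auto simp: indicator_def)
    also have "\<dots> = E - b * P"
      unfolding E P by (subst Bochner_Integration.integral_diff) (auto intro: ind_int[of b 0, simplified] integrable_mult_right ind_int2)
    finally show ?thesis .
  qed
  have "P * (E / P - b) = E - b * P"
  proof (cases "P = 0")
    case True
    have "E \<le> (\<integral>m. \<bar>b\<bar> * indicator {m. exp m * v0 < b} m \<partial>logret_dist \<sigma> \<Delta>)"
      unfolding E by (rule integral_mono[OF ind_int integrable_mult_right[OF ind_int2]]) (auto simp: indicator_def)
    also have "\<dots> = \<bar>b\<bar> * P" unfolding P by simp
    finally have "E \<le> 0" using True by simp
    moreover have "(\<integral>m. 0 \<partial>logret_dist \<sigma> \<Delta>) \<le> E"
      unfolding E by (rule integral_mono[OF _ ind_int]) (use pos in \<open>auto simp: indicator_def\<close>)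
    ultimately show ?thesis using True by simp
  next
    case False
    then show ?thesis by (simp add: field_simps)
  qed
  then show ?thesis unfolding zero_profit_lhs_def cond_exp_below_def
    by (simp add: G P_def[symmetric] E_def[symmetric])
qed

lemma win_eq: "slow_win_prob v0 \<sigma> \<Delta> p b = p * prob_below v0 \<sigma> \<Delta> b + (1 - p)"
proof -
  have "measure (logret_dist \<sigma> \<Delta>) {m. exp m * v0 \<le> b} = measure (logret_dist \<sigma> \<Delta>) ({m. exp m * v0 < b} \<union> {m. exp m * v0 = b})"
    by (rule arg_cong[where f="measure _"]) auto
  also have "\<dots> = measure (logret_dist \<sigma> \<Delta>) {m. exp m * v0 < b} + measure (logret_dist \<sigma> \<Delta>) {m. exp m * v0 = b}"
    by (rule P.finite_measure_Union) auto
  also have "\<dots> = measure (logret_dist \<sigma> \<Delta>) {m. exp m * v0 < b}"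
    using M_point[OF pos(1)] by simp
  finally show ?thesis unfolding slow_win_prob_def prob_below_def vDelta_def by simp
qed

end
definition spay :: "nat \<Rightarrow> (real \<Rightarrow> real) \<Rightarrow> (nat \<Rightarrow> real) \<Rightarrow> nat \<Rightarrow> real" where
  "spay n F \<beta> i = (let hi = Max (\<beta> ` {..<n}); W = {j. j < n \<and> \<beta> j = hi}
      in if \<beta> i = hi then F hi / real (card W) else 0)"

lemma spay_cases:
  "spay n F \<beta> i = 0 \<or> (\<beta> i = Max (\<beta> ` {..<n}) \<and> spay n F \<beta> i = F (Max (\<beta> ` {..<n})) / real (card {j. j < n \<and> \<beta> j = Max (\<beta> ` {..<n})}))"
  unfolding spay_def Let_def by auto

lemma other_idx:
  fixes n i :: nat
  assumes "2 \<le> n" "i < n" obtains j where "j < n" "j \<noteq> i"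
proof -
  show ?thesis
  proof (cases "i = 0")
    case True then show ?thesis using that[of 1] assms by auto
  next
    case False then show ?thesis using that[of 0] assms by auto
  qed
qed

lemma Max_ge': "j < n \<Longrightarrow> \<beta> j \<le> Max (\<beta> ` {..<(n::nat)})"
  by (rule Max_ge) auto

lemma Max_in': "0 < n \<Longrightarrow> \<exists>i<n. \<beta> i = Max (\<beta> ` {..<(n::nat)})"
proof -
  assume "0 < n"
  then have "Max (\<beta> ` {..<n}) \<in> \<beta> ` {..<n}" by (intro Max_in) auto
  then show ?thesis by auto
qed

context
  fixes F :: "real \<Rightarrow> real" and n :: nat
  assumes n2: "2 \<le> n"
    and anti: "\<And>b b'. b \<le> b' \<Longrightarrow> F b' \<le> F b"
    and lip: "\<And>b b'. b \<le> b' \<Longrightarrow> F b - F b' \<le> b' - b"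
    and F0: "0 \<le> F 0"
begin

lemma exist_eq:
  assumes r: "0 \<le> r" "F r = 0"
  shows "(\<forall>i<n. 0 \<le> (\<lambda>_. r) i) \<and> (\<forall>i<n. \<forall>b'\<ge>0. spay n F ((\<lambda>_. r)(i := b')) i \<le> spay n F (\<lambda>_. r) i)"
proof (intro conjI allI impI)
  fix i assume "i < n" then show "0 \<le> (\<lambda>_. r) i" using r by simp
next
  fix i and b' :: real assume i: "i < n" and b': "0 \<le> b'"
  have base: "spay n F (\<lambda>_. r) i = 0"
    using spay_cases[of n F "\<lambda>_. r" i] r by auto
  obtain j where j: "j < n" "j \<noteq> i" using other_idx[OF n2 i] by blast
  define \<beta>' where "\<beta>' = (\<lambda>_. r)(i := b')"
  have "r \<le> Max (\<beta>' ` {..<n})" using Max_ge'[OF j(1), of \<beta>'] j by (simp add: \<beta>'_def)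
  then have "F (Max (\<beta>' ` {..<n})) \<le> 0" using anti r by fastforce
  then have "spay n F \<beta>' i \<le> 0"
    using spay_cases[of n F \<beta>' i] by (metis divide_nonpos_nonneg of_nat_0_le_iff order_refl)
  then show "spay n F ((\<lambda>_. r)(i := b')) i \<le> spay n F (\<lambda>_. r) i"
    using base by (simp add: \<beta>'_def)
qed

lemma eq_root:
  assumes eq: "\<forall>i<n. \<forall>b'\<ge>0. spay n F (\<beta>(i := b')) i \<le> spay n F \<beta> i"
    and nn: "\<forall>i<n. 0 \<le> \<beta> i"
  shows "F (Max (\<beta> ` {..<n})) = 0" "0 \<le> Max (\<beta> ` {..<n})"
proof -
  define b where "b = Max (\<beta> ` {..<n})"
  define W where "W = {j. j < n \<and> \<beta> j = b}"
  obtain i where i: "i < n" "\<beta> i = b" using Max_in'[of n \<beta>] n2 unfolding b_def by auto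
  show "0 \<le> Max (\<beta> ` {..<n})" using nn i b_def by auto
  have finW: "finite W" unfolding W_def by auto
  have iW: "i \<in> W" using i by (simp add: W_def)
  then have cW: "0 < card W" using finW card_gt_0_iff by blast
  have payi: "spay n F \<beta> i = F b / real (card W)"
    unfolding spay_def Let_def b_def[symmetric] W_def[symmetric] using i by simp
  have ge: "0 \<le> F b"
  proof -
    define \<beta>' where "\<beta>' = \<beta>(i := 0)"
    have "0 \<le> spay n F \<beta>' i"
      using spay_cases[of n F \<beta>' i] F0 by (auto simp: \<beta>'_def)
    also have "\<dots> \<le> F b / real (card W)" using eq[rule_format, of i 0] i payi by (simp add: \<beta>'_def)
    finally show ?thesis using cW by (simp add: zero_le_divide_iff)
  qed
  have le: "F b \<le> 0"
  proof (rule ccontr)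
    assume "\<not> F b \<le> 0"
    then have Fb: "0 < F b" by simp
    define b1 where "b1 = b + F b / 4"
    have b1: "b < b1" using Fb by (simp add: b1_def)
    have Fb1: "3 / 4 * F b \<le> F b1" using lip[of b b1] b1 by (simp add: b1_def)
    have dev: "spay n F (\<beta>(l := b1)) l = F b1" if l: "l < n" for l
    proof -
      have bj: "\<beta> j \<le> b" if "j < n" for j using Max_ge'[OF that] b_def by simp
      have M: "Max ((\<beta>(l := b1)) ` {..<n}) = b1"
      proof (rule Max_eqI)
        show "finite ((\<beta>(l := b1)) ` {..<n})" by simp
        show "b1 \<in> (\<beta>(l := b1)) ` {..<n}" using l by force
        fix y assume "y \<in> (\<beta>(l := b1)) ` {..<n}"
        then show "y \<le> b1" using bj b1 by (auto split: if_splits) (smt (verit))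
      qed
      have "{j. j < n \<and> (\<beta>(l := b1)) j = b1} = {l}"
        using l bj b1 by (auto split: if_splits) (smt (verit) bj)
      then show ?thesis unfolding spay_def Let_def M by simp
    qed
    obtain l where l: "l < n" "spay n F \<beta> l \<le> F b / 2"
    proof (cases "2 \<le> card W")
      case True
      have "F b / real (card W) \<le> F b / 2"
        using True Fb by (intro divide_left_mono) auto
      then show ?thesis using that[of i] i payi by simp
    next
      case False
      with cW have "card W = 1" by simp
      then obtain w where "W = {w}" using card_1_singletonE by blast
      with iW have Wi: "W = {i}" by simp
      obtain j where j: "j < n" "j \<noteq> i" using other_idx[OF n2 i(1)] by blast
      have "\<beta> j \<noteq> b" using Wi j by (auto simp: W_def)
      then have "spay n F \<beta> j = 0" unfolding spay_def Let_def b_def[symmetric] by simp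
      then show ?thesis using that[of j] j Fb by simp
    qed
    have "b1 \<ge> 0" using i nn b1 by (metis less_imp_le order_trans)
    then have "spay n F (\<beta>(l := b1)) l \<le> spay n F \<beta> l" using eq l by blast
    then show False using dev[OF l(1)] l(2) Fb1 Fb by simp
  qed
  show "F (Max (\<beta> ` {..<n})) = 0" using ge le b_def by simp
qed

end

theorem mainTheorem5:
  fixes n :: nat and v0 \<sigma> \<Delta> p :: real
  assumes "2 \<le> n" and "0 < v0" and "0 < \<sigma>" and "0 < \<Delta>" and "0 \<le> p" and "p \<le> 1"
  shows "(\<exists>\<beta>. slow_equilibrium n v0 \<sigma> \<Delta> p \<beta>) \<and>
    (\<forall>\<beta>. slow_equilibrium n v0 \<sigma> \<Delta> p \<beta> \<longrightarrow>
       (let b = Max (\<beta> ` {..<n}) in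
          b \<in> {0..v0} \<and> zero_profit_lhs v0 \<sigma> \<Delta> p b = 0 \<and>
          (\<forall>b'\<in>{0..v0}. zero_profit_lhs v0 \<sigma> \<Delta> p b' = 0 \<longrightarrow> b' \<le> b) \<and>
          slow_win_prob v0 \<sigma> \<Delta> p b = p * prob_below v0 \<sigma> \<Delta> b + (1 - p)))"
proof -
  note pos = assms(2,3,4)
  define F where "F = (\<lambda>b. (1 - p) * (v0 - b) + p * Gf v0 \<sigma> \<Delta> b)"
  have top: "top_payoff v0 \<sigma> \<Delta> p = F"
    unfolding F_def by (rule ext) (rule top_eq[OF pos])
  have zp: "zero_profit_lhs v0 \<sigma> \<Delta> p b = F b" for b
    unfolding F_def by (rule zp_eq[OF pos])
  have sp: "slow_payoff n v0 \<sigma> \<Delta> p \<beta> i = spay n F \<beta> i" for \<beta> i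
    unfolding slow_payoff_def spay_def top ..
  have eqv: "slow_equilibrium n v0 \<sigma> \<Delta> p \<beta> \<longleftrightarrow>
     (\<forall>i<n. 0 \<le> \<beta> i) \<and> (\<forall>i<n. \<forall>b'\<ge>0. spay n F (\<beta>(i := b')) i \<le> spay n F \<beta> i)" for \<beta>
    unfolding slow_equilibrium_def sp ..
  have Fd: "F b - F b' = (1 - p) * (b' - b) + p * (Gf v0 \<sigma> \<Delta> b - Gf v0 \<sigma> \<Delta> b')" for b b'
    unfolding F_def by (simp add: algebra_simps)
  have anti: "F b' \<le> F b" if "b \<le> b'" for b b'
  proof -
    have "0 \<le> (1 - p) * (b' - b)" using that assms by simp
    moreover have "0 \<le> p * (Gf v0 \<sigma> \<Delta> b - Gf v0 \<sigma> \<Delta> b')" using G_lip(1)[OF pos that] assms by simp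
    ultimately show ?thesis using Fd[of b b'] by simp
  qed
  have lip: "F b - F b' \<le> b' - b" if "b \<le> b'" for b b'
  proof -
    have "p * (Gf v0 \<sigma> \<Delta> b - Gf v0 \<sigma> \<Delta> b') \<le> p * (b' - b)"
      using G_lip(2)[OF pos that] assms by (intro mult_left_mono) auto
    then show ?thesis using Fd[of b b'] by (simp add: algebra_simps)
  qed
  have strict: "F b' < F b" if "0 \<le> b" "b < b'" for b b'
  proof (cases "p = 0")
    case True then show ?thesis using Fd[of b b'] that by simp
  next
    case False
    then have "0 < p * (Gf v0 \<sigma> \<Delta> b - Gf v0 \<sigma> \<Delta> b')"
      using G_strict[OF pos that] assms by simp
    moreover have "0 \<le> (1 - p) * (b' - b)" using that assms by simp
    ultimately show ?thesis using Fd[of b b'] by simp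
  qed
  have F0: "0 \<le> F 0" unfolding F_def using G_zero[OF pos, of 0] assms by simp
  have Fv0: "F v0 \<le> 0" unfolding F_def using G_nonpos[OF pos, of v0] assms
    by (simp add: mult_nonneg_nonpos)
  have cont: "continuous_on {0..v0} (\<lambda>x. - F x)"
  proof (rule lipschitz_on_continuous_on[where L=1])
    show "1-lipschitz_on {0..v0} (\<lambda>x. - F x)"
      unfolding lipschitz_on_def
    proof (intro conjI ballI)
      fix x y :: real
      show "dist (- F x) (- F y) \<le> 1 * dist x y"
      proof (cases "x \<le> y")
        case True then show ?thesis using lip[OF True] anti[OF True] by (simp add: dist_real_def)
      next
        case False then have "y \<le> x" by simp
        then show ?thesis using lip[OF \<open>y \<le> x\<close>] anti[OF \<open>y \<le> x\<close>] by (simp add: dist_real_def)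
      qed
    qed simp
  qed
  obtain r where r: "0 \<le> r" "r \<le> v0" "- F r = 0"
    using IVT'[of "\<lambda>x. - F x" 0 0 v0] cont F0 Fv0 assms(2) by auto
  have ex: "\<exists>\<beta>. slow_equilibrium n v0 \<sigma> \<Delta> p \<beta>"
    using exist_eq[OF assms(1) anti lip F0, of r] r by (auto simp: eqv)
  have un: "let b = Max (\<beta> ` {..<n}) in
          b \<in> {0..v0} \<and> zero_profit_lhs v0 \<sigma> \<Delta> p b = 0 \<and>
          (\<forall>b'\<in>{0..v0}. zero_profit_lhs v0 \<sigma> \<Delta> p b' = 0 \<longrightarrow> b' \<le> b) \<and>
          slow_win_prob v0 \<sigma> \<Delta> p b = p * prob_below v0 \<sigma> \<Delta> b + (1 - p)"
    if "slow_equilibrium n v0 \<sigma> \<Delta> p \<beta>" for \<beta>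
  proof -
    define b where "b = Max (\<beta> ` {..<n})"
    have e: "\<forall>i<n. 0 \<le> \<beta> i" "\<forall>i<n. \<forall>b'\<ge>0. spay n F (\<beta>(i := b')) i \<le> spay n F \<beta> i"
      using that eqv by auto
    have Fb: "F b = 0" and b0: "0 \<le> b"
      using eq_root[OF assms(1) anti lip F0 e(2) e(1)] by (auto simp: b_def)
    have bv: "b \<le> v0"
    proof (rule ccontr)
      assume "\<not> b \<le> v0"
      then have "F b < F v0" using strict[of v0 b] assms(2) by simp
      then show False using Fb Fv0 by simp
    qed
    have largest: "\<forall>b'\<in>{0..v0}. zero_profit_lhs v0 \<sigma> \<Delta> p b' = 0 \<longrightarrow> b' \<le> b"
    proof (intro ballI impI)
      fix b' assume "b' \<in> {0..v0}" "zero_profit_lhs v0 \<sigma> \<Delta> p b' = 0"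
      then have "F b' = 0" using zp by simp
      show "b' \<le> b"
      proof (rule ccontr)
        assume "\<not> b' \<le> b"
        then have "F b' < F b" using strict[OF b0] by simp
        then show False using Fb \<open>F b' = 0\<close> by simp
      qed
    qed
    show ?thesis unfolding b_def[symmetric] Let_def
      using b0 bv Fb zp largest win_eq[OF pos] by simp
  qed
  show ?thesis using ex un by blast
qed

end
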